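(* Assume (A.3). Then there is a finite constant $C_\chi>0$, independent of $h$ and $\omega$, such that for all sufficiently small $h$, \[ M(y^\star_h(0),y^\star_h(T))+\frac{r^2(y^\star_h,u^\star_h)}{2\omega}\le M(y^\star(0),y^\star(T))+C_\chi\Big(h^{\eta\lambda}+\frac{h^{2\eta\lambda}+h^\ell}{\omega}\Big). \]
   Context: Optimal control problem (OCP). Let $T>0$. The candidate space $\mathcal{X}$ consists of pairs $(y,u)$ with $y:[0,T]\to\mathbb{R}^{n_y}$, $y\in L^\infty$, $\dot y\in L^2$ (weak derivative), and $u\in L^\infty([0,T];\mathbb{R}^{n_u})$, with norm $\|(y,u)\|_{\mathcal{X}}=\|\dot y\|_{L^2}+\operatorname{ess\,sup}_t\|(y(t),u(t))\|_\infty$. Given $M:\mathbb{R}^{n_y}\times\mathbb{R}^{n_y}\to\mathbb{R}$, $b:\mathbb{R}^{n_y}\times\mathbb{R}^{n_y}\to\mathbb{R}^{n_b}$, $f_1:\mathbb{R}^{n_y}\times\mathbb{R}^{n_u}\times[0,T]\to\mathbb{R}^{n_y}$, $f_2:\mathbb{R}^{n_y}\times\mathbb{R}^{n_u}\times[0,T]\to\mathbb{R}^{n_c}$ and bounds $y_L\le y_R$, $u_L\le u_R$, the OCP is: minimize $M(y(0),y(T))$ over $\mathcal{X}$ subject to $b(y(0),y(T))=0$, $\dot y(t)=f_1(y(t),u(t),t)$, $f_2(y(t),u(t),t)=0$ a.e., $y_L\le y\le y_R$, $u_L\le u\le u_R$ everywhere. $f(\dot y,y,u,t)=(f_1(y,u,t)-\dot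 y,f_2(y,u,t))$, $r(y,u)=(\int_0^T\|f(\dot y(t),y(t),u(t),t)\|_2^2dt+\|b(y(0),y(T))\|_2^2)^{1/2}$. $(y^\star,u^\star)$ is a fixed local minimizer. Discretization. Mesh $0=t_1<\dots<t_{N+1}=T$, $I_i=[t_i,t_{i+1}]$, $h=\max_i(t_{i+1}-t_i)$, degree $p\in\mathbb{N}$; $\mathcal{X}_{h,p}$: $y_h$ continuous and polynomial of degree $\le p$ on each $I_i$, $u_h$ polynomial of degree $\le p-1$ on each $I_i$. Quadrature $\mathcal{Q}_{h,q}$: $q$ pairs $(t,\alpha)$, $\alpha>0$, per mesh interval; $Q_{h,q}(y_h,u_h)=\sum\alpha\|f(\dot y_h(t),y_h(t),u_h(t),t)\|_2^2$. $\mathcal{T}_{h,m}$: union over $i$ of the images on $I_i$ of $\tau_k=-\cos(k\pi/m)$, $k=0,\dots,m$. For $\omega>0$, problem $(P_h)$: minimize $M(y_h(0),y_h(T))+\frac1{2\omega}(Q_{h,q}(y_h,u_h)+\|b(y_h(0),y_h(T))\|_2^2)$ over $\mathcal{X}_{h,p}$ subject to the bounds at all $t\in\mathcal{T}_{h,m}$; $\mathcal{B}_{h,p}$ is its feasible set. Prerequisites. (Approximability) there are $h_0,\eta,C_\eta>0$ such that for all $h\le h_0$ there is $(y_h,u_h)\in\mathcal{B}_{h,p}$ with $\|(y^\star,u^\star)-(y_h,u_h)\|_{\mathcal{X}}\le C_\eta h^\eta$; a fixed such pair is denoted $(\hat y_h,\hat u_h)$. $(y_L,u_L),(y_R,u_R)\in\mathcal{X}_{h,p}$.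 (Quadrature order) there are $\ell,C_\ell,h_0>0$ with $|\int_0^T\|f(\dot y_h,y_h,u_h,t)\|_2^2dt-Q_{h,q}(y_h,u_h)|\le C_\ell h^\ell$ for all $h\le h_0$ and $(y_h,u_h)\in\mathcal{X}_{h,p}$. $(y^\star_h,u^\star_h)$ is a local minimizer of $(P_h)$ with $(P_h)$-objective at most that of $(\hat y_h,\hat u_h)$. (A.3): there are $\lambda\in(0,1]$, $C_\lambda>0$, $\epsilon>0$ with $|M(y^\star(0),y^\star(T))-M(a,a')|\le C_\lambda\|(y^\star(0)-a,y^\star(T)-a')\|_2^\lambda$ and $\|b(y^\star(0),y^\star(T))-b(a,a')\|_2\le C_\lambda\|(y^\star(0)-a,y^\star(T)-a')\|_2^\lambda$ whenever $\|(y^\star(0)-a,y^\star(T)-a')\|_2\le\epsilon$, and for each $t$, $\|(f_1(y^\star(t),u^\star(t),t)-f_1(v,w,t),f_2(y^\star(t),u^\star(t),t)-f_2(v,w,t))\|_2\le C_\lambda\|(y^\star(t)-v,u^\star(t)-w)\|_2^\lambda$ whenever $\|(y^\star(t)-v,u^\star(t)-w)\|_2\le\epsilon$. *)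

theory Defs
  imports "HOL-Analysis.Analysis" "HOL-Computational_Algebra.Polynomial"
begin

definition pvec :: "real poly ^ 'n \<Rightarrow> real \<Rightarrow> real ^ 'n" where
  "pvec P t = (\<chi> j. poly (P $ j) t)"

text \<open>Mesh 0 = tm 0 < tm 1 < ... < tm N = T (0-based indexing); interval i is {tm i..tm (Suc i)}.\<close>
definition is_mesh :: "real \<Rightarrow> nat \<Rightarrow> (nat \<Rightarrow> real) \<Rightarrow> bool" where
  "is_mesh T N tm \<longleftrightarrow> 1 \<le> N \<and> tm 0 = 0 \<and> tm N = T \<and> (\<forall>i<N. tm i < tm (Suc i))"

definition mesh_size :: "nat \<Rightarrow> (nat \<Rightarrow> real) \<Rightarrow> real" where
  "mesh_size N tm = Max ((\<lambda>i. tm (Suc i) - tm i) ` {..<N})"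

definition in_Xhp :: "real \<Rightarrow> nat \<Rightarrow> (nat \<Rightarrow> real) \<Rightarrow> nat \<Rightarrow>
    (real \<Rightarrow> real ^ 'ny) \<Rightarrow> (real \<Rightarrow> real ^ 'nu) \<Rightarrow> bool" where
  "in_Xhp T N tm p y u \<longleftrightarrow>
     continuous_on {0..T} y \<and>
     (\<forall>i<N. \<exists>P :: real poly ^ 'ny. (\<forall>j. degree (P $ j) \<le> p) \<and>
              (\<forall>t\<in>{tm i..tm (Suc i)}. y t = pvec P t)) \<and>
     (\<forall>i<N. \<exists>P :: real poly ^ 'nu. (\<forall>j. degree (P $ j) \<le> p - 1) \<and>
              (\<forall>t\<in>{tm i<..<tm (Suc i)}. u t = pvec P t))"

text \<open>Value of the polynomial piece of u on interval i (well defined at the interval endpoints).\<close>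
definition upiece :: "(nat \<Rightarrow> real) \<Rightarrow> (real \<Rightarrow> real ^ 'n) \<Rightarrow> nat \<Rightarrow> real \<Rightarrow> real ^ 'n" where
  "upiece tm u i t = pvec (SOME P. \<forall>s\<in>{tm i<..<tm (Suc i)}. u s = pvec P s) t"

definition ypiece_deriv :: "(nat \<Rightarrow> real) \<Rightarrow> (real \<Rightarrow> real ^ 'n) \<Rightarrow> nat \<Rightarrow> real \<Rightarrow> real ^ 'n" where
  "ypiece_deriv tm y i t = vector_derivative y (at t within {tm i..tm (Suc i)})"

text \<open>f(ydot,y,u,t) = (f1(y,u,t) - ydot, f2(y,u,t)); its Euclidean norm is the product norm.\<close>
definition fres :: "(real ^ 'ny \<Rightarrow> real ^ 'nu \<Rightarrow> real \<Rightarrow> real ^ 'ny) \<Rightarrow>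
    (real ^ 'ny \<Rightarrow> real ^ 'nu \<Rightarrow> real \<Rightarrow> real ^ 'nc) \<Rightarrow>
    real ^ 'ny \<Rightarrow> real ^ 'ny \<Rightarrow> real ^ 'nu \<Rightarrow> real \<Rightarrow> (real ^ 'ny) \<times> (real ^ 'nc)" where
  "fres f1 f2 yd y u t = (f1 y u t - yd, f2 y u t)"

text \<open>Quadrature: on interval i the nodes qt i j and weights qa i j, j < q.\<close>
definition Qh :: "nat \<Rightarrow> (nat \<Rightarrow> real) \<Rightarrow> nat \<Rightarrow> (nat \<Rightarrow> nat \<Rightarrow> real) \<Rightarrow> (nat \<Rightarrow> nat \<Rightarrow> real) \<Rightarrow>
    (real ^ 'ny \<Rightarrow> real ^ 'nu \<Rightarrow> real \<Rightarrow> real ^ 'ny) \<Rightarrow>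
    (real ^ 'ny \<Rightarrow> real ^ 'nu \<Rightarrow> real \<Rightarrow> real ^ 'nc) \<Rightarrow>
    (real \<Rightarrow> real ^ 'ny) \<Rightarrow> (real \<Rightarrow> real ^ 'nu) \<Rightarrow> real" where
  "Qh N tm q qt qa f1 f2 y u =
     (\<Sum>i<N. \<Sum>j<q. qa i j *
        (norm (fres f1 f2 (ypiece_deriv tm y i (qt i j)) (y (qt i j)) (upiece tm u i (qt i j)) (qt i j)))\<^sup>2)"

text \<open>Chebyshev-Lobatto point k (k = 0..m) mapped to interval i.\<close>
definition cheb_node :: "(nat \<Rightarrow> real) \<Rightarrow> nat \<Rightarrow> nat \<Rightarrow> nat \<Rightarrow> real" where
  "cheb_node tm m i k = tm i + (1 - cos (real k * pi / real m)) / 2 * (tm (Suc i) - tm i)"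

definition in_Bhp :: "real \<Rightarrow> nat \<Rightarrow> (nat \<Rightarrow> real) \<Rightarrow> nat \<Rightarrow> nat \<Rightarrow>
    (real \<Rightarrow> real ^ 'ny) \<Rightarrow> (real \<Rightarrow> real ^ 'ny) \<Rightarrow> (real \<Rightarrow> real ^ 'nu) \<Rightarrow> (real \<Rightarrow> real ^ 'nu) \<Rightarrow>
    (real \<Rightarrow> real ^ 'ny) \<Rightarrow> (real \<Rightarrow> real ^ 'nu) \<Rightarrow> bool" where
  "in_Bhp T N tm p m yL yR uL uR y u \<longleftrightarrow>
     in_Xhp T N tm p y u \<and>
     (\<forall>i<N. \<forall>k\<le>m. yL (cheb_node tm m i k) \<le> y (cheb_node tm m i k) \<and>
                    y (cheb_node tm m i k) \<le> yR (cheb_node tm m i k) \<and>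
                    upiece tm uL i (cheb_node tm m i k) \<le> upiece tm u i (cheb_node tm m i k) \<and>
                    upiece tm u i (cheb_node tm m i k) \<le> upiece tm uR i (cheb_node tm m i k))"

definition Jh :: "real \<Rightarrow> nat \<Rightarrow> (nat \<Rightarrow> real) \<Rightarrow> nat \<Rightarrow> (nat \<Rightarrow> nat \<Rightarrow> real) \<Rightarrow> (nat \<Rightarrow> nat \<Rightarrow> real) \<Rightarrow>
    real \<Rightarrow> (real ^ 'ny \<Rightarrow> real ^ 'ny \<Rightarrow> real) \<Rightarrow> (real ^ 'ny \<Rightarrow> real ^ 'ny \<Rightarrow> real ^ 'nb) \<Rightarrow>
    (real ^ 'ny \<Rightarrow> real ^ 'nu \<Rightarrow> real \<Rightarrow> real ^ 'ny) \<Rightarrow>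
    (real ^ 'ny \<Rightarrow> real ^ 'nu \<Rightarrow> real \<Rightarrow> real ^ 'nc) \<Rightarrow>
    (real \<Rightarrow> real ^ 'ny) \<Rightarrow> (real \<Rightarrow> real ^ 'nu) \<Rightarrow> real" where
  "Jh T N tm q qt qa \<omega> M b f1 f2 y u =
     M (y 0) (y T) + (Qh N tm q qt qa f1 f2 y u + (norm (b (y 0) (y T)))\<^sup>2) / (2 * \<omega>)"

text \<open>g is the weak derivative of y on [0,T] and lies in L^2; y is taken to be the
  absolutely continuous representative.\<close>
definition is_wderiv :: "real \<Rightarrow> (real \<Rightarrow> real ^ 'n) \<Rightarrow> (real \<Rightarrow> real ^ 'n) \<Rightarrow> bool" where
  "is_wderiv T y g \<longleftrightarrow> g \<in> borel_measurable (lebesgue_on {0..T}) \<and>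
     (\<lambda>t. (norm (g t))\<^sup>2) integrable_on {0..T} \<and>
     (\<forall>t\<in>{0..T}. (g has_integral (y t - y 0)) {0..t})"

definition wderiv :: "real \<Rightarrow> (real \<Rightarrow> real ^ 'n) \<Rightarrow> real \<Rightarrow> real ^ 'n" where
  "wderiv T y = (SOME g. is_wderiv T y g)"

definition Linf :: "real \<Rightarrow> (real \<Rightarrow> 'a::real_normed_vector) \<Rightarrow> bool" where
  "Linf T g \<longleftrightarrow> g \<in> borel_measurable (lebesgue_on {0..T}) \<and>
     (\<exists>c. AE t in lebesgue_on {0..T}. norm (g t) \<le> c)"

definition in_X :: "real \<Rightarrow> (real \<Rightarrow> real ^ 'ny) \<Rightarrow> (real \<Rightarrow> real ^ 'nu) \<Rightarrow> bool" where
  "in_X T y u \<longleftrightarrow> Linf T y \<and> (\<exists>g. is_wderiv T y g) \<and> Linf T u"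

definition ess_sup_on :: "real \<Rightarrow> (real \<Rightarrow> real) \<Rightarrow> real" where
  "ess_sup_on T g = Inf {c. AE t in lebesgue_on {0..T}. g t \<le> c}"

definition Xnorm :: "real \<Rightarrow> (real \<Rightarrow> real ^ 'ny) \<Rightarrow> (real \<Rightarrow> real ^ 'nu) \<Rightarrow> real" where
  "Xnorm T y u = sqrt (integral {0..T} (\<lambda>t. (norm (wderiv T y t))\<^sup>2))
                 + ess_sup_on T (\<lambda>t. infnorm (y t, u t))"

definition Xdist :: "real \<Rightarrow> (real \<Rightarrow> real ^ 'ny) \<Rightarrow> (real \<Rightarrow> real ^ 'nu) \<Rightarrow>
    (real \<Rightarrow> real ^ 'ny) \<Rightarrow> (real \<Rightarrow> real ^ 'nu) \<Rightarrow> real" where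
  "Xdist T y u y' u' = Xnorm T (\<lambda>t. y t - y' t) (\<lambda>t. u t - u' t)"

definition rsq :: "real \<Rightarrow> (real ^ 'ny \<Rightarrow> real ^ 'nu \<Rightarrow> real \<Rightarrow> real ^ 'ny) \<Rightarrow>
    (real ^ 'ny \<Rightarrow> real ^ 'nu \<Rightarrow> real \<Rightarrow> real ^ 'nc) \<Rightarrow> (real ^ 'ny \<Rightarrow> real ^ 'ny \<Rightarrow> real ^ 'nb) \<Rightarrow>
    (real \<Rightarrow> real ^ 'ny) \<Rightarrow> (real \<Rightarrow> real ^ 'nu) \<Rightarrow> real" where
  "rsq T f1 f2 b y u =
     integral {0..T} (\<lambda>t. (norm (fres f1 f2 (wderiv T y t) (y t) (u t) t))\<^sup>2)
     + (norm (b (y 0) (y T)))\<^sup>2"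

definition ocp_feasible :: "real \<Rightarrow> (real ^ 'ny \<Rightarrow> real ^ 'ny \<Rightarrow> real ^ 'nb) \<Rightarrow>
    (real ^ 'ny \<Rightarrow> real ^ 'nu \<Rightarrow> real \<Rightarrow> real ^ 'ny) \<Rightarrow>
    (real ^ 'ny \<Rightarrow> real ^ 'nu \<Rightarrow> real \<Rightarrow> real ^ 'nc) \<Rightarrow>
    (real \<Rightarrow> real ^ 'ny) \<Rightarrow> (real \<Rightarrow> real ^ 'ny) \<Rightarrow> (real \<Rightarrow> real ^ 'nu) \<Rightarrow> (real \<Rightarrow> real ^ 'nu) \<Rightarrow>
    (real \<Rightarrow> real ^ 'ny) \<Rightarrow> (real \<Rightarrow> real ^ 'nu) \<Rightarrow> bool" where
  "ocp_feasible T b f1 f2 yL yR uL uR y u \<longleftrightarrow>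
     in_X T y u \<and> b (y 0) (y T) = 0 \<and>
     (\<exists>g. is_wderiv T y g \<and>
        (AE t in lebesgue_on {0..T}. g t = f1 (y t) (u t) t \<and> f2 (y t) (u t) t = 0)) \<and>
     (\<forall>t\<in>{0..T}. yL t \<le> y t \<and> y t \<le> yR t \<and> uL t \<le> u t \<and> u t \<le> uR t)"

definition ocp_local_min :: "real \<Rightarrow> (real ^ 'ny \<Rightarrow> real ^ 'ny \<Rightarrow> real) \<Rightarrow>
    (real ^ 'ny \<Rightarrow> real ^ 'ny \<Rightarrow> real ^ 'nb) \<Rightarrow>
    (real ^ 'ny \<Rightarrow> real ^ 'nu \<Rightarrow> real \<Rightarrow> real ^ 'ny) \<Rightarrow>
    (real ^ 'ny \<Rightarrow> real ^ 'nu \<Rightarrow> real \<Rightarrow> real ^ 'nc) \<Rightarrow>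
    (real \<Rightarrow> real ^ 'ny) \<Rightarrow> (real \<Rightarrow> real ^ 'ny) \<Rightarrow> (real \<Rightarrow> real ^ 'nu) \<Rightarrow> (real \<Rightarrow> real ^ 'nu) \<Rightarrow>
    (real \<Rightarrow> real ^ 'ny) \<Rightarrow> (real \<Rightarrow> real ^ 'nu) \<Rightarrow> bool" where
  "ocp_local_min T M b f1 f2 yL yR uL uR y u \<longleftrightarrow>
     ocp_feasible T b f1 f2 yL yR uL uR y u \<and>
     (\<exists>\<epsilon>>0. \<forall>y' u'. ocp_feasible T b f1 f2 yL yR uL uR y' u' \<and> Xdist T y' u' y u < \<epsilon>
                \<longrightarrow> M (y 0) (y T) \<le> M (y' 0) (y' T))"

definition Ph_local_min :: "real \<Rightarrow> nat \<Rightarrow> (nat \<Rightarrow> real) \<Rightarrow> nat \<Rightarrow> nat \<Rightarrow> nat \<Rightarrow>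
    (nat \<Rightarrow> nat \<Rightarrow> real) \<Rightarrow> (nat \<Rightarrow> nat \<Rightarrow> real) \<Rightarrow> real \<Rightarrow>
    (real ^ 'ny \<Rightarrow> real ^ 'ny \<Rightarrow> real) \<Rightarrow> (real ^ 'ny \<Rightarrow> real ^ 'ny \<Rightarrow> real ^ 'nb) \<Rightarrow>
    (real ^ 'ny \<Rightarrow> real ^ 'nu \<Rightarrow> real \<Rightarrow> real ^ 'ny) \<Rightarrow>
    (real ^ 'ny \<Rightarrow> real ^ 'nu \<Rightarrow> real \<Rightarrow> real ^ 'nc) \<Rightarrow>
    (real \<Rightarrow> real ^ 'ny) \<Rightarrow> (real \<Rightarrow> real ^ 'ny) \<Rightarrow> (real \<Rightarrow> real ^ 'nu) \<Rightarrow> (real \<Rightarrow> real ^ 'nu) \<Rightarrow>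
    (real \<Rightarrow> real ^ 'ny) \<Rightarrow> (real \<Rightarrow> real ^ 'nu) \<Rightarrow> bool" where
  "Ph_local_min T N tm p m q qt qa \<omega> M b f1 f2 yL yR uL uR y u \<longleftrightarrow>
     in_Bhp T N tm p m yL yR uL uR y u \<and>
     (\<exists>\<epsilon>>0. \<forall>y' u'. in_Bhp T N tm p m yL yR uL uR y' u' \<and> Xdist T y' u' y u < \<epsilon>
                \<longrightarrow> Jh T N tm q qt qa \<omega> M b f1 f2 y u \<le> Jh T N tm q qt qa \<omega> M b f1 f2 y' u')"

end

theory Submission
  imports Defs
begin

lemma mesh_mono:
  assumes "is_mesh T N tm" "i \<le> j" "j \<le> N"
  shows "tm i \<le> tm j"
  using assms(2,3)
proof (induction j)
  case 0 then show ?case by simp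
next
  case (Suc j)
  show ?case
  proof (cases "i = Suc j")
    case True then show ?thesis by simp
  next
    case False
    then have "i \<le> j" using Suc by simp
    then have "tm i \<le> tm j" using Suc by simp
    also have "tm j < tm (Suc j)" using assms(1) Suc.prems unfolding is_mesh_def by simp
    finally show ?thesis by simp
  qed
qed

lemma mesh_range:
  assumes "is_mesh T N tm" "i \<le> N"
  shows "tm i \<in> {0..T}"
  using mesh_mono[OF assms(1), of 0 i] mesh_mono[OF assms(1), of i N] assms
  unfolding is_mesh_def by auto

lemma mesh_cover:
  assumes "is_mesh T N tm" "t \<in> {0..T}"
  shows "\<exists>i<N. t \<in> {tm i..tm (Suc i)}"
proof -
  define A where "A = {i. i < N \<and> tm i \<le> t}"
  have fin: "finite A" unfolding A_def by simp
  have ne: "0 \<in> A" using assms unfolding A_def is_mesh_def by auto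
  define i where "i = Max A"
  have iA: "i \<in> A" using fin ne Max_in unfolding i_def by blast
  have "t \<le> tm (Suc i)"
  proof (cases "Suc i < N")
    case True
    have "Suc i \<notin> A" using Max_ge[OF fin] unfolding i_def by fastforce
    then show ?thesis using True unfolding A_def by auto
  next
    case False
    then have "Suc i = N" using iA unfolding A_def by auto
    then show ?thesis using assms unfolding is_mesh_def by auto
  qed
  then show ?thesis using iA unfolding A_def by auto
qed

lemma mesh_cover_open:
  assumes "is_mesh T N tm" "t \<in> {0..T}" "t \<notin> tm ` {..N}"
  shows "\<exists>i<N. t \<in> {tm i<..<tm (Suc i)}"
proof -
  obtain i where "i < N" "t \<in> {tm i..tm (Suc i)}" using mesh_cover[OF assms(1,2)] by blast
  moreover have "t \<noteq> tm i" "t \<noteq> tm (Suc i)" using assms(3) \<open>i < N\<close> by auto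
  ultimately show ?thesis by auto
qed

lemma mesh_size_pos:
  assumes "is_mesh T N tm"
  shows "0 < mesh_size N tm"
proof -
  have "0 \<in> {..<N}" using assms unfolding is_mesh_def by auto
  then have ne: "(\<lambda>i. tm (Suc i) - tm i) ` {..<N} \<noteq> {}" by blast
  have "0 < tm (Suc 0) - tm 0" using assms unfolding is_mesh_def by auto
  also have "\<dots> \<le> mesh_size N tm" unfolding mesh_size_def
    using ne \<open>0 \<in> {..<N}\<close> by (intro Max_ge) auto
  finally show ?thesis .
qed

lemma pvec_cont: "continuous_on S (pvec P)"
  unfolding pvec_def by (auto intro!: continuous_intros)

lemma pvec_deriv: "(pvec P has_vector_derivative pvec (\<chi> j. pderiv (P$j)) x) (at x)"
  unfolding has_vector_derivative_def
  apply (subst has_derivative_componentwise_within)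
  apply (simp add: Basis_vec_def inner_axis)
  apply (simp add: pvec_def)
  apply (intro allI)
  subgoal for j
  proof -
    have e: "(\<lambda>xa. xa * poly (pderiv (P $ j)) x) = (*) (poly (pderiv (P $ j)) x)" by (auto simp: fun_eq_iff)
    show ?thesis using poly_DERIV[of "P$j" x, unfolded has_field_derivative_def] e by simp
  qed
  done

lemma xhp_pieces:
  assumes "in_Xhp T N tm p y u"
  obtains PP QQ where
    "\<forall>i<N. \<forall>t\<in>{tm i..tm (Suc i)}. y t = pvec (PP i) t"
    "\<forall>i<N. \<forall>t\<in>{tm i<..<tm (Suc i)}. u t = pvec (QQ i) t"
    "continuous_on {0..T} y"
proof -
  have "\<forall>i<N. \<exists>P. \<forall>t\<in>{tm i..tm (Suc i)}. y t = pvec P t"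
    using assms unfolding in_Xhp_def by blast
  then obtain PP where 1: "\<forall>i<N. \<forall>t\<in>{tm i..tm (Suc i)}. y t = pvec (PP i) t"
    by (auto dest!: choice_iff[THEN iffD1, of "\<lambda>i P. i < N \<longrightarrow> (\<forall>t\<in>{tm i..tm (Suc i)}. y t = pvec P t)", simplified])
  have "\<forall>i<N. \<exists>P. \<forall>t\<in>{tm i<..<tm (Suc i)}. u t = pvec P t"
    using assms unfolding in_Xhp_def by blast
  then obtain QQ where 2: "\<forall>i<N. \<forall>t\<in>{tm i<..<tm (Suc i)}. u t = pvec (QQ i) t"
    by (auto dest!: choice_iff[THEN iffD1, of "\<lambda>i P. i < N \<longrightarrow> (\<forall>t\<in>{tm i<..<tm (Suc i)}. u t = pvec P t)", simplified])
  show ?thesis using that[OF 1 2] assms unfolding in_Xhp_def by blast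
qed

lemma pvec_bounded_on: "\<exists>B. \<forall>t\<in>{a..b}. norm (pvec P t) \<le> B"
proof -
  have "compact (pvec P ` {a..b})" by (intro compact_continuous_image pvec_cont) auto
  then have "bounded (pvec P ` {a..b})" by (rule compact_imp_bounded)
  then show ?thesis unfolding bounded_iff by blast
qed

lemma finite_bound:
  assumes "\<forall>i<(N::nat). \<exists>B. \<forall>t\<in>A i. norm (F i t :: 'a::real_normed_vector) \<le> B"
  shows "\<exists>B. \<forall>i<N. \<forall>t\<in>A i. norm (F i t) \<le> B"
proof -
  obtain BB where BB: "\<forall>i<N. \<forall>t\<in>A i. norm (F i t) \<le> BB i" using assms by metis
  have "\<forall>i<N. \<forall>t\<in>A i. norm (F i t) \<le> (\<Sum>i<N. \<bar>BB i\<bar>)"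
  proof (intro allI impI ballI)
    fix i t assume "i < N" "t \<in> A i"
    then have "norm (F i t) \<le> \<bar>BB i\<bar>" using BB by force
    also have "\<dots> \<le> (\<Sum>i<N. \<bar>BB i\<bar>)"
      using \<open>i < N\<close> by (intro member_le_sum) auto
    finally show "norm (F i t) \<le> (\<Sum>i<N. \<bar>BB i\<bar>)" .
  qed
  then show ?thesis by blast
qed

lemma xhp_u_bound:
  assumes "is_mesh T N tm" "in_Xhp T N tm p y u"
  shows "\<exists>B. \<forall>t\<in>{0..T} - tm ` {..N}. norm (u t) \<le> B"
proof -
  obtain PP QQ where Q: "\<forall>i<N. \<forall>t\<in>{tm i<..<tm (Suc i)}. u t = pvec (QQ i) t"
    using xhp_pieces[OF assms(2)] by metis
  have "\<forall>i<N. \<exists>B. \<forall>t\<in>{tm i..tm (Suc i)}. norm (pvec (QQ i) t) \<le> B"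
    by (intro allI impI pvec_bounded_on)
  from finite_bound[where F="\<lambda>i. pvec (QQ i)", OF this]
  obtain B where B: "\<forall>i<N. \<forall>t\<in>{tm i..tm (Suc i)}. norm (pvec (QQ i) t) \<le> B" by blast
  have "norm (u t) \<le> B" if tt: "t \<in> {0..T} - tm ` {..N}" for t
  proof -
    obtain i where "i < N" "t \<in> {tm i<..<tm (Suc i)}" using mesh_cover_open[OF assms(1)] tt by blast
    then show ?thesis using B Q by force
  qed
  then show ?thesis by blast
qed

lemma xhp_y_bound:
  assumes "in_Xhp T N tm p y u"
  shows "\<exists>B. \<forall>t\<in>{0..T}. norm (y t) \<le> B"
proof -
  have c: "continuous_on {0..T} y" using assms unfolding in_Xhp_def by blast
  have "compact (y ` {0..T})" by (intro compact_continuous_image c) auto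
  then have "bounded (y ` {0..T})" by (rule compact_imp_bounded)
  then show ?thesis unfolding bounded_iff by blast
qed

lemma xhp_wderiv:
  assumes mesh: "is_mesh T N tm" and X: "in_Xhp T N tm p y u"
  shows "\<exists>g. is_wderiv T y g"
proof -
  obtain PP QQ where P: "\<forall>i<N. \<forall>t\<in>{tm i..tm (Suc i)}. y t = pvec (PP i) t"
    and cont: "continuous_on {0..T} y"
    using xhp_pieces[OF X] by metis
  define DP where "DP i = (\<chi> j. pderiv (PP i $ j))" for i
  have der: "(y has_vector_derivative pvec (DP i) t) (at t)" if "i < N" "t \<in> {tm i<..<tm (Suc i)}" for i t
  proof (rule has_vector_derivative_transform_within_open[of "pvec (PP i)" _ _ "{tm i<..<tm (Suc i)}"])
    show "(pvec (PP i) has_vector_derivative pvec (DP i) t) (at t)"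
      unfolding DP_def by (rule pvec_deriv)
  qed (use that P in auto)
  have "\<forall>i<N. \<exists>B. \<forall>t\<in>{tm i..tm (Suc i)}. norm (pvec (DP i) t) \<le> B"
    by (intro allI impI pvec_bounded_on)
  from finite_bound[where F="\<lambda>i. pvec (DP i)", OF this]
  obtain B where B: "\<forall>i<N. \<forall>t\<in>{tm i..tm (Suc i)}. norm (pvec (DP i) t) \<le> B" by blast
  define S where "S = tm ` {..N}"
  define g where "g t = (if t \<in> S then 0 else vector_derivative y (at t))" for t
  have gd: "(y has_vector_derivative g t) (at t) \<and> norm (g t) \<le> B" if tt: "t \<in> {0..T} - S" for t
  proof -
    obtain i where i: "i < N" "t \<in> {tm i<..<tm (Suc i)}" using mesh_cover_open[OF mesh] tt S_def by blast
    have d: "(y has_vector_derivative pvec (DP i) t) (at t)" using der[OF i] .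
    then have "g t = pvec (DP i) t" using tt unfolding g_def
      by (simp add: vector_derivative_at)
    then show ?thesis using d B i by auto
  qed
  have B0: "0 \<le> B"
  proof -
    have "tm 0 < tm (Suc 0)" "0 < N" using mesh unfolding is_mesh_def by auto
    then have "tm 0 \<in> {tm 0..tm (Suc 0)}" by auto
    then show ?thesis using B \<open>0 < N\<close> by (meson norm_ge_zero order_trans)
  qed
  have gB: "norm (g t) \<le> B" if "t \<in> {0..T}" for t
    using gd[of t] that B0 by (cases "t \<in> S") (auto simp: g_def)
  have hasint: "(g has_integral (y t - y 0)) {0..t}" if "t \<in> {0..T}" for t
  proof (rule fundamental_theorem_of_calculus_interior_strong[of S])
    show "finite S" unfolding S_def by simp
    show "0 \<le> t" using that by simp
    show "(y has_vector_derivative g x) (at x)" if "x \<in> {0<..<t} - S" for x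
      using gd[of x] that \<open>t \<in> {0..T}\<close> by auto
    show "continuous_on {0..t} y" using that by (intro continuous_on_subset[OF cont]) auto
  qed
  have T0: "0 \<le> T" using mesh mesh_range[OF mesh, of N] by auto
  have gint: "g integrable_on {0..T}" using hasint[of T] T0 unfolding integrable_on_def by auto
  have meas: "g \<in> borel_measurable (lebesgue_on {0..T})"
    by (rule integrable_imp_measurable[OF gint])
  have sq: "(\<lambda>t. (norm (g t))\<^sup>2) integrable_on {0..T}"
  proof (rule measurable_bounded_by_integrable_imp_integrable[where g="\<lambda>_. B\<^sup>2"])
    show "(\<lambda>t. (norm (g t))\<^sup>2) \<in> borel_measurable (lebesgue_on {0..T})"
      using meas by (intro borel_measurable_power measurable_compose[OF meas borel_measurable_norm])
    show "(\<lambda>_. B\<^sup>2) integrable_on {0..T}" by (metis integrable_const cbox_interval)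
    show "norm ((norm (g t))\<^sup>2) \<le> B\<^sup>2" if "t \<in> {0..T}" for t
      using gB[OF that] by (simp add: power_mono)
  qed auto
  show ?thesis unfolding is_wderiv_def using meas sq hasint by blast
qed

lemma AE_on_interval_I:
  assumes "negligible Nn" "\<And>t. t \<in> {0..T} \<Longrightarrow> t \<notin> Nn \<Longrightarrow> P t"
  shows "AE t in lebesgue_on {0..(T::real)}. P t"
proof -
  have sub: "{x \<in> space lebesgue. \<not> (x \<in> {0..T} \<longrightarrow> P x)} \<subseteq> Nn" using assms(2) by blast
  have "Nn \<in> null_sets lebesgue" using assms(1) negligible_iff_null_sets by blast
  then have ae: "AE t in lebesgue. t \<in> {0..T} \<longrightarrow> P t" using sub by (rule AE_I')
  have s: "{0..T} \<inter> space lebesgue \<in> sets lebesgue" by simp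
  show ?thesis using AE_restrict_space_iff[OF s] ae by blast
qed

lemma AE_on_interval_E:
  assumes "AE t in lebesgue_on {0..(T::real)}. P t"
  obtains Nn where "negligible Nn" "\<And>t. t \<in> {0..T} \<Longrightarrow> t \<notin> Nn \<Longrightarrow> P t"
proof -
  have s: "{0..T} \<inter> space lebesgue \<in> sets lebesgue" by simp
  have ae: "AE t in lebesgue. t \<in> {0..T} \<longrightarrow> P t"
    using AE_restrict_space_iff[OF s] assms by blast
  obtain Nn where 1: "\<And>x. x \<in> space lebesgue - Nn \<Longrightarrow> x \<in> {0..T} \<longrightarrow> P x" and 2: "Nn \<in> null_sets lebesgue"
    using AE_E3[OF ae] by blast
  have "negligible Nn" using 2 negligible_iff_null_sets by blast
  moreover have "\<And>t. t \<in> {0..T} \<Longrightarrow> t \<notin> Nn \<Longrightarrow> P t" using 1 by simp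
  ultimately show ?thesis using that by blast
qed

lemma wderiv_cont:
  assumes "is_wderiv T y g"
  shows "continuous_on {0..T} y"
proof (cases "0 \<le> T")
  case True
  have i: "(g has_integral (y t - y 0)) {0..t}" if "t \<in> {0..T}" for t
    using assms that unfolding is_wderiv_def by auto
  have gi: "g integrable_on {0..T}" using i[of T] True unfolding integrable_on_def by auto
  have c: "continuous_on {0..T} (\<lambda>t. y 0 + integral {0..t} g)"
    by (rule continuous_on_add[OF continuous_on_const indefinite_integral_continuous_1[OF gi]])
  have eq: "y 0 + integral {0..t} g = y t" if "t \<in> {0..T}" for t
    using integral_unique[OF i[OF that]] by simp
  show ?thesis by (rule continuous_on_eq[OF c]) (simp add: eq)
next
  case False then show ?thesis by simp
qed

lemma wderiv_diff:
  assumes a1: "is_wderiv T y1 g1" and a2: "is_wderiv T y2 g2"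
  shows "is_wderiv T (\<lambda>t. y1 t - y2 t) (\<lambda>t. g1 t - g2 t)"
proof -
  have m1: "g1 \<in> borel_measurable (lebesgue_on {0..T})" and m2: "g2 \<in> borel_measurable (lebesgue_on {0..T})"
    using a1 a2 unfolding is_wderiv_def by auto
  have m: "(\<lambda>t. g1 t - g2 t) \<in> borel_measurable (lebesgue_on {0..T})"
    by (rule borel_measurable_diff[OF m1 m2])
  have s1: "(\<lambda>t. (norm (g1 t))\<^sup>2) integrable_on {0..T}" and s2: "(\<lambda>t. (norm (g2 t))\<^sup>2) integrable_on {0..T}"
    using a1 a2 unfolding is_wderiv_def by auto
  have sq: "(\<lambda>t. (norm (g1 t - g2 t))\<^sup>2) integrable_on {0..T}"
  proof (rule measurable_bounded_by_integrable_imp_integrable[where g="\<lambda>t. 2 * (norm (g1 t))\<^sup>2 + 2 * (norm (g2 t))\<^sup>2"])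
    show "(\<lambda>t. (norm (g1 t - g2 t))\<^sup>2) \<in> borel_measurable (lebesgue_on {0..T})"
      by (intro borel_measurable_power measurable_compose[OF m borel_measurable_norm])
    show "(\<lambda>t. 2 * (norm (g1 t))\<^sup>2 + 2 * (norm (g2 t))\<^sup>2) integrable_on {0..T}"
    proof -
      have "(\<lambda>t. 2 *\<^sub>R (norm (g1 t))\<^sup>2 + 2 *\<^sub>R (norm (g2 t))\<^sup>2) integrable_on {0..T}"
        by (intro integrable_add integrable_cmul s1 s2)
      then show ?thesis by simp
    qed
    show "norm ((norm (g1 t - g2 t))\<^sup>2) \<le> 2 * (norm (g1 t))\<^sup>2 + 2 * (norm (g2 t))\<^sup>2" for t
    proof -
      have "norm (g1 t - g2 t) \<le> norm (g1 t) + norm (g2 t)" by (rule norm_triangle_ineq4)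
      then have "(norm (g1 t - g2 t))\<^sup>2 \<le> (norm (g1 t) + norm (g2 t))\<^sup>2"
        by (intro power_mono) auto
      also have "\<dots> \<le> 2 * (norm (g1 t))\<^sup>2 + 2 * (norm (g2 t))\<^sup>2"
      proof -
        have "0 \<le> (norm (g1 t) - norm (g2 t))\<^sup>2" by simp
        then show ?thesis by (simp add: power2_sum power2_diff)
      qed
      finally show ?thesis by simp
    qed
    show "{0..T} \<in> sets lebesgue" by simp
  qed
  have "((\<lambda>t. g1 t - g2 t) has_integral ((y1 t - y2 t) - (y1 0 - y2 0))) {0..t}" if "t \<in> {0..T}" for t
  proof -
    have h: "((\<lambda>t. g1 t - g2 t) has_integral ((y1 t - y1 0) - (y2 t - y2 0))) {0..t}"
      using a1 a2 that unfolding is_wderiv_def by (intro has_integral_diff) auto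
    have e: "(y1 t - y1 0) - (y2 t - y2 0) = (y1 t - y2 t) - (y1 0 - y2 0)" by (simp add: algebra_simps)
    show ?thesis using h unfolding e .
  qed
  then show ?thesis unfolding is_wderiv_def using m sq by auto
qed

lemma wderiv_unique:
  assumes T: "0 < T" and a1: "is_wderiv T y g1" and a2: "is_wderiv T y g2"
  shows "AE t in lebesgue_on {0..T}. g1 t = g2 t"
proof -
  define hh where "hh x = (if x \<in> {0..T} then g1 x - g2 x else 0)" for x
  have i1: "(g1 has_integral (y t - y 0)) {0..t}" "(g2 has_integral (y t - y 0)) {0..t}" if "t \<in> {0..T}" for t
    using a1 a2 that unfolding is_wderiv_def by auto
  have hint: "(hh has_integral 0) {0..t}" if tt: "t \<in> {0..T}" for t
  proof -
    have "((\<lambda>x. g1 x - g2 x) has_integral (y t - y 0) - (y t - y 0)) {0..t}"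
      using i1[OF tt] by (rule has_integral_diff)
    then have h0: "((\<lambda>x. g1 x - g2 x) has_integral 0) {0..t}" by simp
    show ?thesis
    proof (rule has_integral_eq[OF _ h0])
      fix x assume "x \<in> {0..t}" then show "g1 x - g2 x = hh x" using tt by (simp add: hh_def)
    qed
  qed
  have "((\<lambda>x. g1 x - g2 x) has_integral (y T - y 0) - (y T - y 0)) {0..T}"
    using i1[of T] T by (intro has_integral_diff) auto
  then have "(\<lambda>x. g1 x - g2 x) integrable_on {0..T}" unfolding integrable_on_def by blast
  then have "hh integrable_on UNIV" unfolding hh_def by (simp only: integrable_restrict_UNIV)
  then have hcb: "hh integrable_on cbox a b" for a b by (rule integrable_on_subcbox) simp
  obtain Nn where Nn: "negligible Nn"
    and k: "\<And>x e. \<lbrakk>x \<notin> Nn; 0 < e\<rbrakk> \<Longrightarrow>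
               \<exists>d>0. \<forall>h. 0 < h \<and> h < d \<longrightarrow>
                         norm(integral (cbox x (x + h *\<^sub>R One)) hh /\<^sub>R h ^ DIM(real) - hh x) < e"
    using integrable_ccontinuous_explicit[of hh, OF hcb] by blast
  have z: "hh x = 0" if x: "0 < x" "x < T" "x \<notin> Nn" for x
  proof (rule ccontr)
    assume ne: "hh x \<noteq> 0"
    then have np: "0 < norm (hh x)" by simp
    obtain d where d: "d > 0" and dd: "\<And>h. 0 < h \<Longrightarrow> h < d \<Longrightarrow>
         norm(integral (cbox x (x + h *\<^sub>R One)) hh /\<^sub>R h ^ DIM(real) - hh x) < norm (hh x)"
      using k[OF x(3) np] by blast
    define h where "h = min (d/2) ((T - x)/2)"
    have h1: "0 < h" unfolding h_def using d x by simp
    have "h \<le> d/2" unfolding h_def by (rule min.cobounded1)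
    then have h2: "h < d" using d by linarith
    have "h \<le> (T-x)/2" unfolding h_def by (rule min.cobounded2)
    then have h3: "x + h \<le> T" using x by (simp add: field_simps)
    have c: "integral {0..x} hh + integral {x..x+h} hh = integral {0..x+h} hh"
    proof (rule Henstock_Kurzweil_Integration.integral_combine)
      show "0 \<le> x" "x \<le> x + h" using x h1 by auto
      show "hh integrable_on {0..x + h}" using hcb[of 0 "x+h"] by simp
    qed
    have z1: "integral {0..x} hh = 0" using hint[of x] x by (simp add: integral_unique)
    have z2: "integral {0..x+h} hh = 0" using hint[of "x+h"] x h1 h3 by (simp add: integral_unique)
    have "integral {x..x+h} hh = 0" using c z1 z2 by simp
    then have "integral (cbox x (x + h *\<^sub>R One)) hh = 0" by simp
    then have "norm (hh x) < norm (hh x)" using dd[OF h1 h2] by simp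
    then show False by simp
  qed
  show ?thesis
  proof (rule AE_on_interval_I[of "Nn \<union> {0, T}"])
    show "negligible (Nn \<union> {0, T})" using Nn by simp
    show "g1 t = g2 t" if "t \<in> {0..T}" "t \<notin> Nn \<union> {0, T}" for t
      using z[of t] that unfolding hh_def by auto
  qed
qed

lemma not_AE_False_interval:
  assumes "a < b" "{a..b} \<subseteq> {0..T}" "AE t in lebesgue_on {0..(T::real)}. t \<notin> {a..b}"
  shows False
proof -
  obtain Nn where Nn: "negligible Nn" and P: "\<And>t. t \<in> {0..T} \<Longrightarrow> t \<notin> Nn \<Longrightarrow> t \<notin> {a..b}"
    using AE_on_interval_E[OF assms(3)] by blast
  have "{a..b} \<subseteq> Nn" using P assms(2) by blast
  then have "negligible {a..b}" using Nn negligible_subset by blast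
  then have "negligible (cbox a b)" by simp
  then have "box a b = {}" by (simp only: negligible_interval)
  then show False using assms(1) by simp
qed

lemma ess_sup_facts:
  assumes T: "0 < T" and nn: "\<And>t. 0 \<le> g t" and bd: "AE t in lebesgue_on {0..T}. g t \<le> c"
  shows "0 \<le> ess_sup_on T g" "AE t in lebesgue_on {0..T}. g t \<le> ess_sup_on T g"
proof -
  define S where "S = {c. AE t in lebesgue_on {0..T}. g t \<le> c}"
  have cS: "c \<in> S" using bd unfolding S_def by simp
  have lb: "0 \<le> c'" if "c' \<in> S" for c'
  proof (rule ccontr)
    assume "\<not> 0 \<le> c'"
    then have "AE t in lebesgue_on {0..T}. t \<notin> {0..T}"
      using that nn unfolding S_def by (auto elim!: eventually_mono intro: order_trans)
    then show False using not_AE_False_interval[of 0 T T] T by auto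
  qed
  have ne: "S \<noteq> {}" using cS by blast
  have I0: "0 \<le> Inf S" using ne lb by (intro cInf_greatest) auto
  then show "0 \<le> ess_sup_on T g" unfolding ess_sup_on_def S_def by simp
  have "AE t in lebesgue_on {0..T}. g t \<le> Inf S + inverse (real (Suc n))" for n
  proof -
    have "Inf S < Inf S + inverse (real (Suc n))" by simp
    then obtain c' where "c' \<in> S" "c' < Inf S + inverse (real (Suc n))"
      using cInf_lessD[OF ne] by blast
    then show ?thesis unfolding S_def by (auto elim!: eventually_mono)
  qed
  then have "AE t in lebesgue_on {0..T}. \<forall>n. g t \<le> Inf S + inverse (real (Suc n))"
    by (simp add: AE_all_countable)
  then have "AE t in lebesgue_on {0..T}. g t \<le> Inf S"
  proof (rule eventually_mono)
    fix t assume a: "\<forall>n. g t \<le> Inf S + inverse (real (Suc n))"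
    show "g t \<le> Inf S"
    proof (rule field_le_epsilon)
      fix e :: real assume "0 < e"
      then obtain n where "inverse (real (Suc n)) < e" using reals_Archimedean by blast
      then show "g t \<le> Inf S + e" using a[rule_format, of n] by linarith
    qed
  qed
  then show "AE t in lebesgue_on {0..T}. g t \<le> ess_sup_on T g" unfolding ess_sup_on_def S_def by simp
qed

lemma cont_ae_le:
  fixes f :: "real \<Rightarrow> real"
  assumes T: "0 < T" and cont: "continuous_on {0..T} f" and ae: "AE t in lebesgue_on {0..T}. f t \<le> c"
  shows "\<forall>t\<in>{0..T}. f t \<le> c"
proof (rule ccontr)
  assume "\<not> (\<forall>t\<in>{0..T}. f t \<le> c)"
  then obtain t0 where t0: "t0 \<in> {0..T}" "c < f t0" by force
  then have e: "0 < f t0 - c" by simp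
  obtain d where d: "0 < d" and dd: "\<And>t. t \<in> {0..T} \<Longrightarrow> dist t t0 < d \<Longrightarrow> dist (f t) (f t0) < f t0 - c"
    using cont t0(1) e unfolding continuous_on_iff by metis
  define r where "r = d/2"
  have r: "0 < r" "r < d" using d unfolding r_def by auto
  define a where "a = max 0 (t0 - r)"
  define b where "b = min T (t0 + r)"
  have "0 \<le> a" "t0 - r \<le> a" unfolding a_def by auto
  have "a \<le> t0" using t0 r unfolding a_def by auto
  have "b \<le> T" "b \<le> t0 + r" unfolding b_def by auto
  have "t0 \<le> b" using t0 r unfolding b_def by auto
  have ab: "a < b"
  proof (cases "t0 - r \<le> 0")
    case True
    then have "a = 0" unfolding a_def by simp
    moreover have "0 < b" using T t0 r unfolding b_def by auto
    ultimately show ?thesis by simp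
  next
    case False
    then have "a = t0 - r" unfolding a_def by simp
    then show ?thesis using \<open>t0 \<le> b\<close> r by simp
  qed
  have sub: "{a..b} \<subseteq> {0..T}" using \<open>0 \<le> a\<close> \<open>b \<le> T\<close> by auto
  have big: "c < f t" if "t \<in> {a..b}" for t
  proof -
    have "t - t0 \<le> r" "t0 - t \<le> r" using that \<open>t0 - r \<le> a\<close> \<open>b \<le> t0 + r\<close> by auto
    then have "\<bar>t - t0\<bar> < d" using r by linarith
    then have "dist t t0 < d" by (simp add: dist_real_def)
    then have "dist (f t) (f t0) < f t0 - c" using dd sub that by blast
    then show ?thesis by (simp add: dist_real_def)
  qed
  have "AE t in lebesgue_on {0..T}. t \<notin> {a..b}"
    using ae by (rule eventually_mono) (use big in force)
  then show False using not_AE_False_interval[OF ab sub] by blast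
qed

lemma integral_le_ae:
  fixes F G :: "real \<Rightarrow> real"
  assumes ae: "AE t in lebesgue_on {0..T}. F t \<le> G t" and Gi: "G integrable_on {0..T}"
    and F0: "\<And>t. 0 \<le> F t" and G0: "\<And>t. 0 \<le> G t"
  shows "integral {0..T} F \<le> integral {0..T} G"
proof (cases "F integrable_on {0..T}")
  case True
  obtain Nn where Nn: "negligible Nn" and P: "\<And>t. t \<in> {0..T} \<Longrightarrow> t \<notin> Nn \<Longrightarrow> F t \<le> G t"
    using AE_on_interval_E[OF ae] by blast
  define F' where "F' t = (if t \<in> Nn then 0 else F t)" for t
  have eq: "integral {0..T} F = integral {0..T} F'"
    by (rule integral_spike[OF Nn]) (simp add: F'_def)
  have F'i: "F' integrable_on {0..T}"
    by (rule integrable_spike[OF True Nn]) (simp add: F'_def)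
  have "integral {0..T} F' \<le> integral {0..T} G"
    by (rule integral_le[OF F'i Gi]) (use P G0 in \<open>auto simp: F'_def\<close>)
  then show ?thesis using eq by simp
next
  case False
  then have "integral {0..T} F = 0" by (rule not_integrable_integral)
  moreover have "0 \<le> integral {0..T} G" by (rule integral_nonneg[OF Gi G0])
  ultimately show ?thesis by simp
qed

theorem mainTheorem7:
  fixes T :: real
    and M :: "real ^ 'ny \<Rightarrow> real ^ 'ny \<Rightarrow> real"
    and b :: "real ^ 'ny \<Rightarrow> real ^ 'ny \<Rightarrow> real ^ 'nb"
    and f1 :: "real ^ 'ny \<Rightarrow> real ^ 'nu \<Rightarrow> real \<Rightarrow> real ^ 'ny"
    and f2 :: "real ^ 'ny \<Rightarrow> real ^ 'nu \<Rightarrow> real \<Rightarrow> real ^ 'nc"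
    and yL yR ystar :: "real \<Rightarrow> real ^ 'ny"
    and uL uR ustar :: "real \<Rightarrow> real ^ 'nu"
    and p m q :: nat
    and N :: "'k \<Rightarrow> nat" and tm :: "'k \<Rightarrow> nat \<Rightarrow> real"
    and qt qa :: "'k \<Rightarrow> nat \<Rightarrow> nat \<Rightarrow> real"
    and yhat :: "'k \<Rightarrow> real \<Rightarrow> real ^ 'ny" and uhat :: "'k \<Rightarrow> real \<Rightarrow> real ^ 'nu"
    and h0 \<eta> C\<eta> hq ell Cell lam Clam \<epsilon> :: real
  assumes T_pos: "0 < T"
    and p_pos: "1 \<le> p" and m_pos: "1 \<le> m"
    and bounds_ord: "\<forall>t\<in>{0..T}. yL t \<le> yR t \<and> uL t \<le> uR t"
    and meshes: "\<forall>k. is_mesh T (N k) (tm k)"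
    and quad: "\<forall>k i j. i < N k \<longrightarrow> j < q \<longrightarrow>
                  0 < qa k i j \<and> qt k i j \<in> {tm k i..tm k (Suc i)}"
    and local_min: "ocp_local_min T M b f1 f2 yL yR uL uR ystar ustar"
    and bounds_disc: "\<forall>k. in_Xhp T (N k) (tm k) p yL uL \<and> in_Xhp T (N k) (tm k) p yR uR"
    and approx: "0 < h0" "0 < \<eta>" "0 < C\<eta>"
      "\<forall>k. mesh_size (N k) (tm k) \<le> h0 \<longrightarrow>
          in_Bhp T (N k) (tm k) p m yL yR uL uR (yhat k) (uhat k) \<and>
          Xdist T ystar ustar (yhat k) (uhat k) \<le> C\<eta> * mesh_size (N k) (tm k) powr \<eta>"
    and quad_order: "0 < hq" "0 < ell" "0 < Cell"
      "\<forall>k. mesh_size (N k) (tm k) \<le> hq \<longrightarrow>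
          (\<forall>y u. in_Xhp T (N k) (tm k) p y u \<longrightarrow>
             \<bar>integral {0..T} (\<lambda>t. (norm (fres f1 f2 (wderiv T y t) (y t) (u t) t))\<^sup>2)
               - Qh (N k) (tm k) q (qt k) (qa k) f1 f2 y u\<bar>
             \<le> Cell * mesh_size (N k) (tm k) powr ell)"
    and A3: "0 < lam" "lam \<le> 1" "0 < Clam" "0 < \<epsilon>"
      "\<forall>a a'. norm (ystar 0 - a, ystar T - a') \<le> \<epsilon> \<longrightarrow>
          \<bar>M (ystar 0) (ystar T) - M a a'\<bar> \<le> Clam * norm (ystar 0 - a, ystar T - a') powr lam \<and>
          norm (b (ystar 0) (ystar T) - b a a') \<le> Clam * norm (ystar 0 - a, ystar T - a') powr lam"
      "\<forall>t\<in>{0..T}. \<forall>v w. norm (ystar t - v, ustar t - w) \<le> \<epsilon> \<longrightarrow>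
          norm (f1 (ystar t) (ustar t) t - f1 v w t, f2 (ystar t) (ustar t) t - f2 v w t)
            \<le> Clam * norm (ystar t - v, ustar t - w) powr lam"
  shows "\<exists>C\<chi> > 0. \<exists>h1 > 0. \<forall>k \<omega> y u.
           0 < \<omega> \<longrightarrow> mesh_size (N k) (tm k) \<le> h1 \<longrightarrow>
           Ph_local_min T (N k) (tm k) p m q (qt k) (qa k) \<omega> M b f1 f2 yL yR uL uR y u \<longrightarrow>
           Jh T (N k) (tm k) q (qt k) (qa k) \<omega> M b f1 f2 y u
             \<le> Jh T (N k) (tm k) q (qt k) (qa k) \<omega> M b f1 f2 (yhat k) (uhat k) \<longrightarrow>
           M (y 0) (y T) + rsq T f1 f2 b y u / (2 * \<omega>)
             \<le> M (ystar 0) (ystar T)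
                + C\<chi> * (mesh_size (N k) (tm k) powr (\<eta> * lam)
                         + (mesh_size (N k) (tm k) powr (2 * \<eta> * lam)
                            + mesh_size (N k) (tm k) powr ell) / \<omega>)"
proof -
  obtain gs where gs: "is_wderiv T ystar gs"
    and gs_ae: "AE t in lebesgue_on {0..T}. gs t = f1 (ystar t) (ustar t) t \<and> f2 (ystar t) (ustar t) t = 0"
    and Xs: "in_X T ystar ustar" and bs: "b (ystar 0) (ystar T) = 0"
    using local_min unfolding ocp_local_min_def ocp_feasible_def by blast
  obtain c1 where c1: "AE t in lebesgue_on {0..T}. norm (ystar t) \<le> c1"
    using Xs unfolding in_X_def Linf_def by blast
  obtain c2 where c2: "AE t in lebesgue_on {0..T}. norm (ustar t) \<le> c2"
    using Xs unfolding in_X_def Linf_def by blast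
  have ys_cont: "continuous_on {0..T} ystar" by (rule wderiv_cont[OF gs])
  define D where "D = sqrt (real DIM((real^'ny) \<times> (real^'nu)))"
  have DP: "0 < DIM((real^'ny) \<times> (real^'nu))" by (rule DIM_positive)
  have "1 \<le> DIM((real^'ny) \<times> (real^'nu))" using DP by linarith
  then have "(1::real) \<le> real DIM((real^'ny) \<times> (real^'nu))" by simp
  then have D1: "1 \<le> D" unfolding D_def using real_sqrt_le_mono by fastforce
  define R where "R = 2 * D * C\<eta>"
  have R: "0 < R" using D1 approx(3) unfolding R_def by simp
  define h1 where "h1 = min (min h0 hq) (min 1 ((\<epsilon> / R) powr (1/\<eta>)))"
  have h1: "0 < h1" using approx(1) quad_order(1) A3(4) R unfolding h1_def by simp
  define K1 where "K1 = Clam * R powr lam"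
  have K1: "0 \<le> K1" unfolding K1_def using A3(3) by simp
  define P where "P = 2 * K1\<^sup>2 * T + 2 * C\<eta>\<^sup>2 + K1\<^sup>2"
  have P0: "0 \<le> P" unfolding P_def using T_pos by simp
  define C\<chi> where "C\<chi> = K1 + P + Cell + 1"
  have C\<chi>: "0 < C\<chi>" unfolding C\<chi>_def using K1 P0 quad_order(3) by simp
  have main: "M (y 0) (y T) + rsq T f1 f2 b y u / (2 * \<omega>)
             \<le> M (ystar 0) (ystar T)
                + C\<chi> * (mesh_size (N k) (tm k) powr (\<eta> * lam)
                         + (mesh_size (N k) (tm k) powr (2 * \<eta> * lam)
                            + mesh_size (N k) (tm k) powr ell) / \<omega>)"
    if om: "0 < \<omega>" and hk: "mesh_size (N k) (tm k) \<le> h1"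
      and PL: "Ph_local_min T (N k) (tm k) p m q (qt k) (qa k) \<omega> M b f1 f2 yL yR uL uR y u"
      and JJ: "Jh T (N k) (tm k) q (qt k) (qa k) \<omega> M b f1 f2 y u
             \<le> Jh T (N k) (tm k) q (qt k) (qa k) \<omega> M b f1 f2 (yhat k) (uhat k)"
    for k \<omega> y u
  proof -
    define h where "h = mesh_size (N k) (tm k)"
    have mesh: "is_mesh T (N k) (tm k)" using meshes by blast
    have hpos: "0 < h" unfolding h_def by (rule mesh_size_pos[OF mesh])
    have hh0: "h \<le> h0" "h \<le> hq" "h \<le> 1" "h \<le> (\<epsilon> / R) powr (1/\<eta>)"
      using hk unfolding h_def h1_def by auto
    define \<rho> where "\<rho> = R * h powr \<eta>"
    have \<rho>0: "0 \<le> \<rho>" unfolding \<rho>_def using R by simp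
    have heps: "\<rho> \<le> \<epsilon>"
    proof -
      have "h powr \<eta> \<le> ((\<epsilon> / R) powr (1/\<eta>)) powr \<eta>"
        by (rule powr_mono2) (use approx(2) hpos hh0 in auto)
      also have "\<dots> = \<epsilon> / R" using approx(2) A3(4) R by (simp add: powr_powr)
      finally have "R * h powr \<eta> \<le> R * (\<epsilon> / R)" using R by (intro mult_left_mono) auto
      then show ?thesis unfolding \<rho>_def using R by simp
    qed
    have yX: "in_Xhp T (N k) (tm k) p y u" using PL unfolding Ph_local_min_def in_Bhp_def by blast
    have hatB: "in_Bhp T (N k) (tm k) p m yL yR uL uR (yhat k) (uhat k)"
      and hatD: "Xdist T ystar ustar (yhat k) (uhat k) \<le> C\<eta> * h powr \<eta>"
      using approx(4) hh0(1) unfolding h_def by blast+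
    have hatX: "in_Xhp T (N k) (tm k) p (yhat k) (uhat k)" using hatB unfolding in_Bhp_def by blast
    have hat_cont: "continuous_on {0..T} (yhat k)" using hatX unfolding in_Xhp_def by blast
    define I where "I yy uu = integral {0..T} (\<lambda>t. (norm (fres f1 f2 (wderiv T yy t) (yy t) (uu t) t))\<^sup>2)" for yy uu
    define Q where "Q yy uu = Qh (N k) (tm k) q (qt k) (qa k) f1 f2 yy uu" for yy uu
    define hl where "hl = h powr ell"
    have qy: "\<bar>I y u - Q y u\<bar> \<le> Cell * hl"
      using quad_order(4) hh0(2) yX unfolding I_def Q_def h_def hl_def by blast
    have qhat: "\<bar>I (yhat k) (uhat k) - Q (yhat k) (uhat k)\<bar> \<le> Cell * hl"
      using quad_order(4) hh0(2) hatX unfolding I_def Q_def h_def hl_def by blast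
    define e where "e = (\<lambda>t. ystar t - yhat k t)"
    define dd where "dd = (\<lambda>t. ustar t - uhat k t)"
    obtain gh where gh: "is_wderiv T (yhat k) gh" using xhp_wderiv[OF mesh hatX] by blast
    have "is_wderiv T e (\<lambda>t. gs t - gh t)" unfolding e_def by (rule wderiv_diff[OF gs gh])
    then have "is_wderiv T e (wderiv T e)" unfolding wderiv_def by (rule someI[of "is_wderiv T e"])
    define gd where "gd = wderiv T e"
    have gd: "is_wderiv T e gd" unfolding gd_def by fact
    have gh': "is_wderiv T (yhat k) (wderiv T (yhat k))" using gh unfolding wderiv_def by (rule someI[of "is_wderiv T (yhat k)"])
    have "is_wderiv T (\<lambda>t. ystar t - e t) (\<lambda>t. gs t - gd t)" by (rule wderiv_diff[OF gs gd])
    moreover have "(\<lambda>t. ystar t - e t) = yhat k" unfolding e_def by auto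
    ultimately have gh2: "is_wderiv T (yhat k) (\<lambda>t. gs t - gd t)" by simp
    have uniq: "AE t in lebesgue_on {0..T}. wderiv T (yhat k) t = gs t - gd t"
      by (rule wderiv_unique[OF T_pos gh' gh2])
    define \<delta> where "\<delta> = ess_sup_on T (\<lambda>t. infnorm (e t, dd t))"
    obtain B1 where B1: "\<forall>t\<in>{0..T}. norm (yhat k t) \<le> B1" using xhp_y_bound[OF hatX] by blast
    obtain B2 where B2: "\<forall>t\<in>{0..T} - tm k ` {..N k}. norm (uhat k t) \<le> B2"
      using xhp_u_bound[OF mesh hatX] by blast
    have aeS: "AE t in lebesgue_on {0..T}. t \<in> {0..T} \<and> t \<notin> tm k ` {..N k}"
      by (rule AE_on_interval_I[of "tm k ` {..N k}"]) (auto intro: negligible_finite)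
    have aebd: "AE t in lebesgue_on {0..T}. infnorm (e t, dd t) \<le> c1 + B1 + (c2 + B2)"
      using eventually_conj[OF aeS eventually_conj[OF c1 c2]]
    proof (rule eventually_mono)
      fix t assume a: "(t \<in> {0..T} \<and> t \<notin> tm k ` {..N k}) \<and> norm (ystar t) \<le> c1 \<and> norm (ustar t) \<le> c2"
      have n1: "norm (e t) \<le> c1 + B1"
        using a B1 norm_triangle_ineq4[of "ystar t" "yhat k t"] unfolding e_def by force
      have n2: "norm (dd t) \<le> c2 + B2"
        using a B2 norm_triangle_ineq4[of "ustar t" "uhat k t"] unfolding dd_def by force
      have "infnorm (e t, dd t) \<le> norm (e t, dd t)" by (rule infnorm_le_norm)
      also have "\<dots> \<le> norm (e t) + norm (dd t)" by (rule norm_Pair_le)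
      finally show "infnorm (e t, dd t) \<le> c1 + B1 + (c2 + B2)" using n1 n2 by linarith
    qed
    have \<delta>0: "0 \<le> \<delta>" and ae\<delta>: "AE t in lebesgue_on {0..T}. infnorm (e t, dd t) \<le> \<delta>"
      using ess_sup_facts[OF T_pos _ aebd] infnorm_pos_le unfolding \<delta>_def by blast+
    define Ig where "Ig = integral {0..T} (\<lambda>t. (norm (gd t))\<^sup>2)"
    have XD: "Xdist T ystar ustar (yhat k) (uhat k) = sqrt Ig + \<delta>"
      unfolding Xdist_def Xnorm_def Ig_def \<delta>_def gd_def e_def dd_def by simp
    have Igi: "(\<lambda>t. (norm (gd t))\<^sup>2) integrable_on {0..T}" using gd unfolding is_wderiv_def by blast
    have Ig0: "0 \<le> Ig" unfolding Ig_def by (rule integral_nonneg[OF Igi]) simp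
    have sq0: "0 \<le> sqrt Ig" using Ig0 by simp
    have \<delta>h: "\<delta> \<le> C\<eta> * h powr \<eta>" using XD hatD sq0 by linarith
    have sqh: "sqrt Ig \<le> C\<eta> * h powr \<eta>" using XD hatD \<delta>0 by linarith
    have hpe: "(h powr \<eta>)\<^sup>2 = h powr (2*\<eta>)"
    proof -
      have "h powr (2*\<eta>) = h powr (\<eta> + \<eta>)" by simp
      also have "\<dots> = h powr \<eta> * h powr \<eta>" by (rule powr_add)
      finally show ?thesis by (simp add: power2_eq_square)
    qed
    have Igh: "Ig \<le> C\<eta>\<^sup>2 * h powr (2*\<eta>)"
    proof -
      have "Ig = (sqrt Ig)\<^sup>2" using Ig0 by simp
      also have "\<dots> \<le> (C\<eta> * h powr \<eta>)\<^sup>2" by (rule power_mono[OF sqh sq0])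
      also have "\<dots> = C\<eta>\<^sup>2 * h powr (2*\<eta>)" using hpe by (simp add: power_mult_distrib)
      finally show ?thesis .
    qed
    have D\<delta>: "2 * (D * \<delta>) \<le> \<rho>"
    proof -
      have "D * \<delta> \<le> D * (C\<eta> * h powr \<eta>)" using D1 \<delta>h by (intro mult_left_mono) auto
      then show ?thesis unfolding \<rho>_def R_def by simp
    qed
    have aeN: "AE t in lebesgue_on {0..T}. norm (e t, dd t) \<le> D * \<delta>"
      using ae\<delta>
    proof (rule eventually_mono)
      fix t assume a: "infnorm (e t, dd t) \<le> \<delta>"
      have "norm (e t, dd t) \<le> D * infnorm (e t, dd t)" unfolding D_def by (rule norm_le_infnorm)
      also have "\<dots> \<le> D * \<delta>" using a D1 by (intro mult_left_mono) auto
      finally show "norm (e t, dd t) \<le> D * \<delta>" .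
    qed
    have e_cont: "continuous_on {0..T} (\<lambda>t. norm (e t))"
      unfolding e_def by (intro continuous_on_norm continuous_on_diff ys_cont hat_cont)
    have aeE: "AE t in lebesgue_on {0..T}. norm (e t) \<le> D * \<delta>"
      using aeN by (rule eventually_mono) (rule order_trans[OF norm_fst_le])
    have eall: "\<forall>t\<in>{0..T}. norm (e t) \<le> D * \<delta>" by (rule cont_ae_le[OF T_pos e_cont aeE])
    define \<delta>b where "\<delta>b = norm (ystar 0 - yhat k 0, ystar T - yhat k T)"
    have \<delta>b: "\<delta>b \<le> \<rho>"
    proof -
      have "\<delta>b \<le> norm (e 0) + norm (e T)" unfolding \<delta>b_def e_def by (rule norm_Pair_le)
      also have "\<dots> \<le> D * \<delta> + D * \<delta>" using eall T_pos by (intro add_mono) auto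
      finally show ?thesis using D\<delta> by linarith
    qed
    define a where "a = h powr (\<eta> * lam)"
    define a2 where "a2 = h powr (2 * \<eta> * lam)"
    have a0: "0 \<le> a" "0 \<le> a2" unfolding a_def a2_def by simp_all
    have aa: "a\<^sup>2 = a2"
    proof -
      have "2 * \<eta> * lam = \<eta> * lam + \<eta> * lam" by (simp add: algebra_simps)
      then have "h powr (2 * \<eta> * lam) = h powr (\<eta> * lam + \<eta> * lam)" by (simp only:)
      also have "\<dots> = h powr (\<eta> * lam) * h powr (\<eta> * lam)" by (rule powr_add)
      finally show ?thesis unfolding a_def a2_def by (simp add: power2_eq_square)
    qed
    have \<rho>l: "Clam * \<rho> powr lam = K1 * a"
      unfolding \<rho>_def K1_def a_def by (simp add: powr_mult powr_powr)
    have powl: "Clam * x powr lam \<le> K1 * a" if "0 \<le> x" "x \<le> \<rho>" for x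
    proof -
      have "x powr lam \<le> \<rho> powr lam" by (rule powr_mono2) (use that A3(1) in auto)
      then have "Clam * x powr lam \<le> Clam * \<rho> powr lam" using A3(3) by (intro mult_left_mono) auto
      then show ?thesis using \<rho>l by simp
    qed
    have "norm (ystar 0 - yhat k 0, ystar T - yhat k T) \<le> \<epsilon>" using \<delta>b heps unfolding \<delta>b_def by linarith
    from A3(5)[rule_format, OF this]
    have endp: "\<bar>M (ystar 0) (ystar T) - M (yhat k 0) (yhat k T)\<bar> \<le> Clam * \<delta>b powr lam \<and>
          norm (b (ystar 0) (ystar T) - b (yhat k 0) (yhat k T)) \<le> Clam * \<delta>b powr lam"
      unfolding \<delta>b_def .
    have \<delta>b0: "0 \<le> \<delta>b" unfolding \<delta>b_def by simp
    have Mhat: "M (yhat k 0) (yhat k T) \<le> M (ystar 0) (ystar T) + K1 * a"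
      using endp powl[OF \<delta>b0 \<delta>b] by linarith
    have bhat: "norm (b (yhat k 0) (yhat k T)) \<le> K1 * a"
      using endp powl[OF \<delta>b0 \<delta>b] bs by simp
    have bhat2: "(norm (b (yhat k 0) (yhat k T)))\<^sup>2 \<le> K1\<^sup>2 * a2"
    proof -
      have "(norm (b (yhat k 0) (yhat k T)))\<^sup>2 \<le> (K1 * a)\<^sup>2" by (rule power_mono[OF bhat]) simp
      then show ?thesis using aa by (simp add: power_mult_distrib)
    qed
    define F where "F t = (norm (fres f1 f2 (wderiv T (yhat k) t) (yhat k t) (uhat k t) t))\<^sup>2" for t
    define G where "G t = 2 * (K1 * a)\<^sup>2 + 2 * (norm (gd t))\<^sup>2" for t
    have sq2: "(x + z)\<^sup>2 \<le> 2 * x\<^sup>2 + 2 * z\<^sup>2" for x z :: real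
    proof -
      have "0 \<le> (x - z)\<^sup>2" by simp
      then show ?thesis by (simp add: power2_sum power2_diff)
    qed
    have aeFG: "AE t in lebesgue_on {0..T}. F t \<le> G t"
      using eventually_conj[OF aeS eventually_conj[OF uniq eventually_conj[OF gs_ae aeN]]]
    proof (rule eventually_mono)
      fix t assume a: "(t \<in> {0..T} \<and> t \<notin> tm k ` {..N k}) \<and> wderiv T (yhat k) t = gs t - gd t \<and>
          (gs t = f1 (ystar t) (ustar t) t \<and> f2 (ystar t) (ustar t) t = 0) \<and> norm (e t, dd t) \<le> D * \<delta>"
      define X where "X = (f1 (ystar t) (ustar t) t - f1 (yhat k t) (uhat k t) t,
                           f2 (ystar t) (ustar t) t - f2 (yhat k t) (uhat k t) t)"
      have Dd0: "0 \<le> D * \<delta>" using D1 \<delta>0 by simp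
      have "norm (e t, dd t) \<le> D * \<delta>" using a by blast
      then have nle: "norm (e t, dd t) \<le> \<rho>" using D\<delta> Dd0 by linarith
      have tT: "t \<in> {0..T}" using a by blast
      have "norm (ystar t - yhat k t, ustar t - uhat k t) \<le> \<epsilon>" using nle heps unfolding e_def dd_def by linarith
      from A3(6)[rule_format, OF tT this]
      have nX: "norm X \<le> Clam * norm (e t, dd t) powr lam"
        unfolding X_def e_def dd_def .
      have nX2: "norm X \<le> K1 * a" using nX powl[OF norm_ge_zero nle] by linarith
      have fr: "fres f1 f2 (wderiv T (yhat k) t) (yhat k t) (uhat k t) t = (gd t, 0) - X"
      proof -
        have w: "wderiv T (yhat k) t = f1 (ystar t) (ustar t) t - gd t" and f2z: "f2 (ystar t) (ustar t) t = 0"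
          using a by auto
        show ?thesis unfolding fres_def X_def w f2z by (simp add: prod_eq_iff)
      qed
      have "norm (fres f1 f2 (wderiv T (yhat k) t) (yhat k t) (uhat k t) t) \<le> norm (gd t, 0::real^'nc) + norm X"
        unfolding fr by (rule norm_triangle_ineq4)
      also have "\<dots> \<le> K1 * a + norm (gd t)" using nX2 by (simp add: norm_Pair)
      finally have nf: "norm (fres f1 f2 (wderiv T (yhat k) t) (yhat k t) (uhat k t) t) \<le> K1 * a + norm (gd t)" .
      have "F t \<le> (K1 * a + norm (gd t))\<^sup>2" unfolding F_def by (rule power_mono[OF nf norm_ge_zero])
      also have "\<dots> \<le> G t" unfolding G_def by (rule sq2)
      finally show "F t \<le> G t" .
    qed
    have Gi: "G integrable_on {0..T}"
    proof -
      have "(\<lambda>t. 2 * (K1 * a)\<^sup>2 + 2 *\<^sub>R (norm (gd t))\<^sup>2) integrable_on {0..T}"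
        by (intro integrable_add integrable_cmul Igi) (metis integrable_const cbox_interval)
      then show ?thesis unfolding G_def by simp
    qed
    have IG: "integral {0..T} G = 2 * (K1 * a)\<^sup>2 * T + 2 * Ig"
    proof -
      have ci: "(\<lambda>t. 2 * (K1 * a)\<^sup>2) integrable_on {0..T}" by (metis integrable_const cbox_interval)
      have gi2: "(\<lambda>t. 2 * (norm (gd t))\<^sup>2) integrable_on {0..T}" using integrable_cmul[OF Igi, where c=2] by simp
      have "integral {0..T} G = integral {0..T} (\<lambda>t. 2 * (K1 * a)\<^sup>2) + integral {0..T} (\<lambda>t. 2 * (norm (gd t))\<^sup>2)"
        unfolding G_def by (rule integral_add[OF ci gi2])
      moreover have "integral {0..T} (\<lambda>t. 2 * (K1 * a)\<^sup>2) = 2 * (K1 * a)\<^sup>2 * T"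
        using T_pos by (simp add: content_real)
      moreover have "integral {0..T} (\<lambda>t. 2 * (norm (gd t))\<^sup>2) = 2 * Ig"
        using integral_cmul[where c=2 and f="\<lambda>t. (norm (gd t))\<^sup>2" and S="{0..T}"] unfolding Ig_def by simp
      ultimately show ?thesis by simp
    qed
    have Ihat: "I (yhat k) (uhat k) \<le> 2 * (K1 * a)\<^sup>2 * T + 2 * Ig"
    proof -
      have "I (yhat k) (uhat k) = integral {0..T} F" unfolding I_def F_def by simp
      also have "\<dots> \<le> integral {0..T} G"
        by (rule integral_le_ae[OF aeFG Gi]) (simp_all add: F_def G_def)
      finally show ?thesis using IG by simp
    qed
    have h2e: "h powr (2*\<eta>) \<le> a2" unfolding a2_def
      by (rule powr_mono') (use hpos hh0(3) approx(2) A3(1,2) in auto)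
    have Ihat2: "I (yhat k) (uhat k) \<le> (2 * K1\<^sup>2 * T + 2 * C\<eta>\<^sup>2) * a2"
    proof -
      have "2 * (K1 * a)\<^sup>2 * T = 2 * K1\<^sup>2 * T * a2" using aa by (simp add: power_mult_distrib)
      moreover have "Ig \<le> C\<eta>\<^sup>2 * a2" using Igh h2e by (meson order_trans mult_left_mono zero_le_power2)
      moreover have "(2 * K1\<^sup>2 * T + 2 * C\<eta>\<^sup>2) * a2 = 2 * K1\<^sup>2 * T * a2 + 2 * (C\<eta>\<^sup>2 * a2)"
        by (simp add: algebra_simps)
      ultimately show ?thesis using Ihat by linarith
    qed
    define Bn where "Bn = (norm (b (y 0) (y T)))\<^sup>2"
    have Jy: "Jh T (N k) (tm k) q (qt k) (qa k) \<omega> M b f1 f2 y u = M (y 0) (y T) + (Q y u + Bn) / (2 * \<omega>)"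
      unfolding Jh_def Q_def Bn_def by simp
    have Jhat: "Jh T (N k) (tm k) q (qt k) (qa k) \<omega> M b f1 f2 (yhat k) (uhat k)
        = M (yhat k 0) (yhat k T) + (Q (yhat k) (uhat k) + (norm (b (yhat k 0) (yhat k T)))\<^sup>2) / (2 * \<omega>)"
      unfolding Jh_def Q_def by simp
    have rs: "rsq T f1 f2 b y u = I y u + Bn" unfolding rsq_def I_def Bn_def by simp
    have om2: "0 < 2 * \<omega>" using om by simp
    have step1: "M (y 0) (y T) + rsq T f1 f2 b y u / (2 * \<omega>)
        \<le> M (y 0) (y T) + (Q y u + Bn) / (2 * \<omega>) + Cell * hl / (2 * \<omega>)"
    proof -
      have "I y u + Bn \<le> Q y u + Bn + Cell * hl" using qy by linarith
      then have "(I y u + Bn) / (2 * \<omega>) \<le> (Q y u + Bn + Cell * hl) / (2 * \<omega>)"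
        using om2 by (intro divide_right_mono) auto
      then show ?thesis unfolding rs by (simp add: add_divide_distrib)
    qed
    have step2: "M (y 0) (y T) + (Q y u + Bn) / (2 * \<omega>) + Cell * hl / (2 * \<omega>)
        \<le> M (yhat k 0) (yhat k T) + (Q (yhat k) (uhat k) + (norm (b (yhat k 0) (yhat k T)))\<^sup>2) / (2 * \<omega>) + Cell * hl / (2 * \<omega>)"
      using JJ Jy Jhat by linarith
    have step3: "M (yhat k 0) (yhat k T) + (Q (yhat k) (uhat k) + (norm (b (yhat k 0) (yhat k T)))\<^sup>2) / (2 * \<omega>) + Cell * hl / (2 * \<omega>)
        \<le> M (ystar 0) (ystar T) + K1 * a + (P * a2 + 2 * Cell * hl) / (2 * \<omega>)"
    proof -
      have "Q (yhat k) (uhat k) + (norm (b (yhat k 0) (yhat k T)))\<^sup>2 + Cell * hl \<le> P * a2 + 2 * Cell * hl"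
      proof -
        have "P * a2 = (2 * K1\<^sup>2 * T + 2 * C\<eta>\<^sup>2) * a2 + K1\<^sup>2 * a2" unfolding P_def by (simp add: algebra_simps)
        moreover have "Q (yhat k) (uhat k) \<le> I (yhat k) (uhat k) + Cell * hl" using qhat by (simp add: abs_le_iff)
        ultimately show ?thesis using Ihat2 bhat2 by linarith
      qed
      then have "(Q (yhat k) (uhat k) + (norm (b (yhat k 0) (yhat k T)))\<^sup>2 + Cell * hl) / (2 * \<omega>) \<le> (P * a2 + 2 * Cell * hl) / (2 * \<omega>)"
        using om2 by (intro divide_right_mono) auto
      then show ?thesis using Mhat by (simp add: add_divide_distrib)
    qed
    have step4: "K1 * a + (P * a2 + 2 * Cell * hl) / (2 * \<omega>) \<le> C\<chi> * (a + (a2 + hl) / \<omega>)"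
    proof -
      have hl0: "0 \<le> hl" unfolding hl_def by simp
      have e1: "(P * a2 + 2 * Cell * hl) / (2 * \<omega>) = (P / 2) * (a2 / \<omega>) + Cell * (hl / \<omega>)"
        using om by (simp add: field_simps)
      have "K1 * a \<le> C\<chi> * a" unfolding C\<chi>_def using a0 P0 quad_order(3) by (intro mult_right_mono) auto
      moreover have "(P / 2) * (a2 / \<omega>) \<le> C\<chi> * (a2 / \<omega>)" unfolding C\<chi>_def using a0 P0 K1 quad_order(3) om
        by (intro mult_right_mono) auto
      moreover have "Cell * (hl / \<omega>) \<le> C\<chi> * (hl / \<omega>)" unfolding C\<chi>_def using hl0 P0 K1 om
        by (intro mult_right_mono) auto
      moreover have "C\<chi> * (a + (a2 + hl) / \<omega>) = C\<chi> * a + C\<chi> * (a2 / \<omega>) + C\<chi> * (hl / \<omega>)"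
        by (simp add: algebra_simps add_divide_distrib)
      ultimately show ?thesis using e1 by linarith
    qed
    have fin: "M (y 0) (y T) + rsq T f1 f2 b y u / (2 * \<omega>) \<le> M (ystar 0) (ystar T) + C\<chi> * (a + (a2 + hl) / \<omega>)"
      using step1 step2 step3 step4 by linarith
    then show ?thesis unfolding a_def a2_def hl_def h_def .
  qed
  show ?thesis
    apply (rule exI[of _ C\<chi>])
    apply (rule conjI[OF C\<chi>])
    apply (rule exI[of _ h1])
    apply (rule conjI[OF h1])
    apply (intro allI impI)
    apply (rule main)
       apply assumption+
    done
qed

end
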